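(* Let $\{\mathbb{P}_\theta\}$ be a parametric model with log-likelihood $\ell_\theta$, true parameter $\theta_0$, and parameter split into two blocks $\theta=(\theta_1,\theta_2)$; let $G$ be a compact group acting on the sample space with Haar probability measure $\mathbb{Q}$, and suppose the invariant parameter set $\Theta_G$ is $\{\theta:\theta_2=0\}$. Let $I(\theta)=\mathbb{E}_\theta\nabla\ell_\theta\nabla\ell_\theta^\top$ be the Fisher information with blocks $I_{11},I_{12},I_{21},I_{22}$ corresponding to $(\theta_1,\theta_2)$, assumed invertible, and let $\bar I(\theta)=\mathrm{Cov}_\theta\big(\mathbb{E}_{g\sim\mathbb{Q}}\nabla\ell_\theta(gX)\big)$, assumed invertible. Suppose the augmented MLE (aMLE) has asymptotic covariance $I(\theta_0)^{-1}\bar I(\theta_0)I(\theta_0)^{-1}$ and the constrained MLE (cMLE) has asymptotic covariance $I_{11}(\theta_0)^{-1}$ for estimating $\theta_1$. Define $$M_\theta=\begin{bmatrix}I_{11}(\theta)^{-1}&(I(\theta)^{-1})_{1\cdot}\\(I(\theta)^{-1})_{\cdot1}&\bar I(\theta)^{-1}\end{bmatrix},$$ where $(I^{-1})_{1\cdot}$ is the submatrix of $I^{-1}$ consisting of the rows indexed by the coordinates of $\theta_1$ and $(I^{-1})_{\cdot1}$ its transpose (the corresponding columns). Then the aMLE is asymptotically more efficient than the cMLE in estimating $\theta_1$, i.e. $[I(\theta_0)^{-1}\bar I(\theta_0)I(\theta_0)^{-1}]_{11}\preceq I_{11}(\theta_0)^{-1}$, if and only if $M_{\theta_0}$ is positive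 semidefinite.
   Context: The augmented MLE maximizes $\sum_i\int_G\ell_\theta(gX_i)\,d\mathbb{Q}(g)$ over $\theta$; the constrained MLE maximizes $\sum_i\ell_\theta(X_i)$ over $\theta\in\Theta_G$. $[A]_{11}$ denotes the top-left block of $A$ corresponding to $\theta_1$; $\preceq$ is the Loewner order. *)

theory Defs
  imports "HOL-Probability.Probability"
begin

definition psd :: "real^'n^'n \<Rightarrow> bool" where
  "psd A \<longleftrightarrow> transpose A = A \<and> (\<forall>x. 0 \<le> x \<bullet> (A *v x))"

definition loewner_le :: "real^'n^'n \<Rightarrow> real^'n^'n \<Rightarrow> bool" where
  "loewner_le A B \<longleftrightarrow> psd (B - A)"

text \<open>Top-left block (coordinates of theta_1) of a matrix indexed by 'p1 + 'p2.\<close>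
definition blk11 :: "'c^('p1::finite + 'p2::finite)^('p1 + 'p2) \<Rightarrow> 'c^'p1^'p1" where
  "blk11 A = (\<chi> i j. A $ Inl i $ Inl j)"

definition fisher_info :: "'x measure \<Rightarrow> ('x \<Rightarrow> real^'n) \<Rightarrow> real^'n^'n" where
  "fisher_info P s = (\<chi> i j. \<integral>x. s x $ i * s x $ j \<partial>P)"

definition avg_score :: "'g measure \<Rightarrow> ('g \<Rightarrow> 'x \<Rightarrow> 'x) \<Rightarrow> ('x \<Rightarrow> real^'n) \<Rightarrow> 'x \<Rightarrow> real^'n" where
  "avg_score Q act s x = (\<chi> i. \<integral>g. s (act g x) $ i \<partial>Q)"

definition cov_matrix :: "'x measure \<Rightarrow> ('x \<Rightarrow> real^'n) \<Rightarrow> real^'n^'n" where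
  "cov_matrix P v = (\<chi> i j. \<integral>x. (v x $ i - (\<integral>y. v y $ i \<partial>P)) * (v x $ j - (\<integral>y. v y $ j \<partial>P)) \<partial>P)"

definition M_mat :: "real^('p1::finite + 'p2::finite)^('p1 + 'p2) \<Rightarrow> real^('p1 + 'p2)^('p1 + 'p2)
      \<Rightarrow> real^('p1 + ('p1 + 'p2))^('p1 + ('p1 + 'p2))" where
  "M_mat I Ibar = (\<chi> a b. case (a, b) of
       (Inl i, Inl j) \<Rightarrow> matrix_inv (blk11 I) $ i $ j
     | (Inl i, Inr k) \<Rightarrow> matrix_inv I $ Inl i $ k
     | (Inr k, Inl j) \<Rightarrow> matrix_inv I $ k $ Inl j
     | (Inr k, Inr l) \<Rightarrow> matrix_inv Ibar $ k $ l)"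

end

theory Submission
  imports Defs
begin


lemma inv_props:
  fixes A :: "real^'n^'n"
  assumes "invertible A"
  shows "A ** matrix_inv A = mat 1 \<and> matrix_inv A ** A = mat 1"
  using assms unfolding invertible_def matrix_inv_def by (rule someI_ex)

lemma inv_sym:
  fixes A :: "real^'n^'n"
  assumes "invertible A" "transpose A = A"
  shows "transpose (matrix_inv A) = matrix_inv A"
proof -
  let ?X = "matrix_inv A"
  have h: "A ** ?X = mat 1" "?X ** A = mat 1" using inv_props[OF assms(1)] by auto
  have "transpose ?X ** A = mat 1"
    by (metis assms(2) h(1) matrix_transpose_mul transpose_mat)
  then have "transpose ?X = transpose ?X ** (A ** ?X)" using h by simp
  also have "\<dots> = ?X" by (simp add: matrix_mul_assoc \<open>transpose ?X ** A = mat 1\<close>)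
  finally show ?thesis .
qed

definition bm :: "real^'a^'a \<Rightarrow> real^'b^'a \<Rightarrow> real^'a^'b \<Rightarrow> real^'b^'b \<Rightarrow> real^('a+'b)^('a+'b)" where
  "bm P R R' S = (\<chi> a b. case (a,b) of (Inl i, Inl j) \<Rightarrow> P$i$j | (Inl i, Inr k) \<Rightarrow> R$i$k
     | (Inr k, Inl j) \<Rightarrow> R'$k$j | (Inr k, Inr l) \<Rightarrow> S$k$l)"

lemma bm_nth: "bm P R R' S $ Inl i $ Inl j = P $ i $ j" "bm P R R' S $ Inl i $ Inr k = R $ i $ k"
  "bm P R R' S $ Inr k $ Inl j = R' $ k $ j" "bm P R R' S $ Inr k $ Inr l = S $ k $ l"
  by (simp_all add: bm_def)

lemma sum_UNIV_plus:
  fixes f :: "('a::finite + 'b::finite) \<Rightarrow> real"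
  shows "sum f UNIV = sum (\<lambda>i. f (Inl i)) UNIV + sum (\<lambda>i. f (Inr i)) UNIV"
  using sum.Plus[of "UNIV::'a set" "UNIV::'b set" f] by (simp add: comp_def)

lemma quad_bm:
  fixes z :: "real^('a::finite+'b::finite)"
  shows "z \<bullet> (bm P R R' S *v z) = (\<chi> i. z$Inl i) \<bullet> (P *v (\<chi> i. z$Inl i)) + (\<chi> i. z$Inl i) \<bullet> (R *v (\<chi> i. z$Inr i))
     + (\<chi> i. z$Inr i) \<bullet> (R' *v (\<chi> i. z$Inl i)) + (\<chi> i. z$Inr i) \<bullet> (S *v (\<chi> i. z$Inr i))"
  unfolding inner_vec_def matrix_vector_mult_def
  apply (simp only: sum_UNIV_plus)
  apply (simp add: bm_nth sum_distrib_left ring_distribs sum.distrib)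
  done

lemma transpose_bm: "transpose (bm P R R' S) = bm (transpose P) (transpose R') (transpose R) (transpose S)"
proof -
  have "transpose (bm P R R' S) $ a $ b = bm (transpose P) (transpose R') (transpose R) (transpose S) $ a $ b" for a b
    by (cases a; cases b) (simp_all add: transpose_def bm_nth)
  then show ?thesis by (simp add: vec_eq_iff)
qed

lemma bm_eq: "bm P R R' S = bm P2 R2 R2' S2 \<longleftrightarrow> P = P2 \<and> R = R2 \<and> R' = R2' \<and> S = S2"
proof
  assume H: "bm P R R' S = bm P2 R2 R2' S2"
  have "P $ i $ j = P2 $ i $ j" for i j using bm_nth(1)[of P R R' S i j] bm_nth(1)[of P2 R2 R2' S2 i j] H by simp
  moreover have "R $ i $ j = R2 $ i $ j" for i j using bm_nth(2)[of P R R' S i j] bm_nth(2)[of P2 R2 R2' S2 i j] H by simp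
  moreover have "R' $ i $ j = R2' $ i $ j" for i j using bm_nth(3)[of P R R' S i j] bm_nth(3)[of P2 R2 R2' S2 i j] H by simp
  moreover have "S $ i $ j = S2 $ i $ j" for i j using bm_nth(4)[of P R R' S i j] bm_nth(4)[of P2 R2 R2' S2 i j] H by simp
  ultimately show "P = P2 \<and> R = R2 \<and> R' = R2' \<and> S = S2" by (simp add: vec_eq_iff)
qed simp

lemma transpose_diff: "transpose (A - B) = transpose A - (transpose B :: real^'n^'m)"
  by (simp add: vec_eq_iff transpose_def)
lemma schur:
  fixes P :: "real^'a::finite^'a" and R :: "real^'b::finite^'a" and B :: "real^'b^'b"
  assumes Binv: "invertible B" and Bsym: "transpose B = B" and Bpsd: "\<forall>x. 0 \<le> x \<bullet> (B *v x)"
  shows "psd (P - R ** B ** transpose R) \<longleftrightarrow> psd (bm P R (transpose R) (matrix_inv B))"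
proof -
  define S where "S = matrix_inv B"
  have SB: "S ** B = mat 1" and BS: "B ** S = mat 1" using inv_props[OF Binv] S_def by auto
  have Ssym: "transpose S = S" using inv_sym[OF Binv Bsym] S_def by simp
  have Spsd: "0 \<le> y \<bullet> (S *v y)" for y
  proof -
    have "y = B *v (S *v y)" by (simp add: matrix_vector_mul_assoc BS)
    then have "y \<bullet> (S *v y) = (S *v y) \<bullet> (B *v (S *v y))" by (metis inner_commute)
    then show ?thesis using Bpsd by simp
  qed
  have Xsym: "transpose (R ** B ** transpose R) = R ** B ** transpose R"
    by (simp add: matrix_transpose_mul Bsym matrix_mul_assoc)
  have sym_iff: "transpose (P - R ** B ** transpose R) = P - R ** B ** transpose R \<longleftrightarrow>
      transpose (bm P R (transpose R) S) = bm P R (transpose R) S"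
    by (simp add: transpose_diff Xsym transpose_bm bm_eq Ssym)
  have key: "z \<bullet> (bm P R (transpose R) S *v z) =
     (\<chi> i. z$Inl i) \<bullet> ((P - R ** B ** transpose R) *v (\<chi> i. z$Inl i))
     + ((\<chi> i. z$Inr i) + B *v (transpose R *v (\<chi> i. z$Inl i))) \<bullet> (S *v ((\<chi> i. z$Inr i) + B *v (transpose R *v (\<chi> i. z$Inl i))))"
    for z
  proof -
    define u where "u = (\<chi> i. z$Inl i)"
    define w where "w = (\<chi> i. z$Inr i)"
    define t where "t = transpose R *v u"
    define c where "c = B *v t"
    have Sc: "S *v c = t" by (simp add: c_def matrix_vector_mul_assoc SB)
    have e1: "u \<bullet> (R *v w) = t \<bullet> w" by (simp add: t_def dot_lmul_matrix)
    have e2: "c \<bullet> (S *v w) = t \<bullet> w"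
      by (metis Sc Ssym dot_lmul_matrix transpose_matrix_vector)
    have e3: "u \<bullet> ((R ** B ** transpose R) *v u) = t \<bullet> c"
      by (simp add: t_def c_def matrix_vector_mul_assoc[symmetric] dot_lmul_matrix)
    have e4: "w \<bullet> (transpose R *v u) = t \<bullet> w" by (simp add: t_def inner_commute)
    have "z \<bullet> (bm P R (transpose R) S *v z) = u \<bullet> (P *v u) + u \<bullet> (R *v w) + w \<bullet> (transpose R *v u) + w \<bullet> (S *v w)"
      unfolding u_def w_def by (rule quad_bm)
    also have "\<dots> = u \<bullet> ((P - R ** B ** transpose R) *v u) + (w + c) \<bullet> (S *v (w + c))"
    proof -
      have f1: "(w + c) \<bullet> (S *v (w + c)) = w \<bullet> (S *v w) + w \<bullet> (S *v c) + (c \<bullet> (S *v w) + c \<bullet> (S *v c))"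
        by (simp only: matrix_vector_right_distrib inner_add_left inner_add_right)
      have f2: "u \<bullet> ((P - R ** B ** transpose R) *v u) = u \<bullet> (P *v u) - u \<bullet> ((R ** B ** transpose R) *v u)"
        by (simp only: matrix_vector_mult_diff_rdistrib inner_diff_right)
      have e5: "w \<bullet> t = t \<bullet> w" and e6: "c \<bullet> t = t \<bullet> c" by (rule inner_commute)+
      show ?thesis unfolding f1 f2 e1 e2 e3 e4 Sc using e5 e6 by linarith
    qed
    finally show ?thesis unfolding u_def w_def c_def t_def .
  qed
  have qf_iff: "(\<forall>x. 0 \<le> x \<bullet> ((P - R ** B ** transpose R) *v x)) \<longleftrightarrow> (\<forall>z. 0 \<le> z \<bullet> (bm P R (transpose R) S *v z))"
  proof
    assume H: "\<forall>x. 0 \<le> x \<bullet> ((P - R ** B ** transpose R) *v x)"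
    show "\<forall>z. 0 \<le> z \<bullet> (bm P R (transpose R) S *v z)"
    proof
      fix z :: "real^('a+'b)"
      show "0 \<le> z \<bullet> (bm P R (transpose R) S *v z)"
        unfolding key by (intro add_nonneg_nonneg Spsd H[rule_format])
    qed
  next
    assume H: "\<forall>z. 0 \<le> z \<bullet> (bm P R (transpose R) S *v z)"
    show "\<forall>x. 0 \<le> x \<bullet> ((P - R ** B ** transpose R) *v x)"
    proof
      fix u :: "real^'a"
      define z :: "real^('a+'b)" where "z = (\<chi> a. case a of Inl i \<Rightarrow> u$i | Inr k \<Rightarrow> - (B *v (transpose R *v u))$k)"
      have zl: "(\<chi> i. z$Inl i) = u" and zr: "(\<chi> i. z$Inr i) = - (B *v (transpose R *v u))"
        by (simp_all add: z_def vec_eq_iff)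
      have "0 \<le> z \<bullet> (bm P R (transpose R) S *v z)" using H by blast
      also have "\<dots> = u \<bullet> ((P - R ** B ** transpose R) *v u)"
        using key[of z] unfolding zl zr by simp
      finally show "0 \<le> u \<bullet> ((P - R ** B ** transpose R) *v u)" .
    qed
  qed
  show ?thesis unfolding psd_def S_def[symmetric] using sym_iff qf_iff by blast
qed



lemma abs_prod_le_sq: "\<bar>a*b\<bar> \<le> a\<^sup>2 + (b::real)\<^sup>2"
proof (cases "\<bar>a\<bar> \<le> \<bar>b\<bar>")
  case True
  have "\<bar>a*b\<bar> = \<bar>a\<bar>*\<bar>b\<bar>" by (rule abs_mult)
  also have "\<dots> \<le> \<bar>b\<bar>*\<bar>b\<bar>" by (rule mult_right_mono[OF True abs_ge_zero])
  also have "\<dots> = b\<^sup>2" by (simp add: power2_eq_square)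
  also have "\<dots> \<le> a\<^sup>2 + b\<^sup>2" by simp
  finally show ?thesis .
next
  case False
  have "\<bar>a*b\<bar> = \<bar>a\<bar>*\<bar>b\<bar>" by (rule abs_mult)
  also have "\<dots> \<le> \<bar>a\<bar>*\<bar>a\<bar>" using False by (intro mult_left_mono) auto
  also have "\<dots> = a\<^sup>2" by (simp add: power2_eq_square)
  also have "\<dots> \<le> a\<^sup>2 + b\<^sup>2" by simp
  finally show ?thesis .
qed

lemma cov_psd:
  fixes P :: "'x measure" and v :: "'x \<Rightarrow> real^'n"
  assumes prob: "prob_space P"
    and meas: "\<And>i. (\<lambda>x. v x $ i) \<in> borel_measurable P"
    and L2: "\<And>i. integrable P (\<lambda>x. (v x $ i)\<^sup>2)"
  shows "0 \<le> a \<bullet> (cov_matrix P v *v a)"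
proof -
  interpret prob_space P by (rule prob)
  define w where "w i y = v y $ i - (\<integral>z. v z $ i \<partial>P)" for i y
  have vint: "integrable P (\<lambda>x. v x $ i)" for i
    by (rule square_integrable_imp_integrable[OF meas L2])
  have wm: "(\<lambda>y. w i y) \<in> borel_measurable P" for i
    unfolding w_def using meas by measurable
  have w2: "integrable P (\<lambda>y. (w i y)\<^sup>2)" for i
  proof -
    have "(\<lambda>y. (w i y)\<^sup>2) = (\<lambda>y. (v y $ i)\<^sup>2 - 2 * (\<integral>z. v z $ i \<partial>P) * v y $ i + (\<integral>z. v z $ i \<partial>P)\<^sup>2)"
      by (auto simp: w_def power2_eq_square algebra_simps)
    then show ?thesis using L2 vint by simp
  qed
  have wint: "integrable P (\<lambda>y. w i y * w j y)" for i j
  proof (rule Bochner_Integration.integrable_bound[OF Bochner_Integration.integrable_add[OF w2[of i] w2[of j]]])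
    show "(\<lambda>y. w i y * w j y) \<in> borel_measurable P" using wm by measurable
    show "AE x in P. norm (w i x * w j x) \<le> norm ((w i x)\<^sup>2 + (w j x)\<^sup>2)"
    proof (intro AE_I2)
      fix x
      show "norm (w i x * w j x) \<le> norm ((w i x)\<^sup>2 + (w j x)\<^sup>2)"
        using abs_prod_le_sq[of "w i x" "w j x"] by simp
    qed
  qed
  have C: "cov_matrix P v $ i $ j = (\<integral>y. w i y * w j y \<partial>P)" for i j
    by (simp add: cov_matrix_def w_def)
  have "a \<bullet> (cov_matrix P v *v a) = (\<Sum>i\<in>UNIV. \<Sum>j\<in>UNIV. (a$i * a$j) * (\<integral>y. w i y * w j y \<partial>P))"
    by (simp add: inner_vec_def matrix_vector_mult_def C sum_distrib_left algebra_simps)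
  also have "\<dots> = (\<integral>y. (\<Sum>i\<in>UNIV. \<Sum>j\<in>UNIV. (a$i * a$j) * (w i y * w j y)) \<partial>P)"
    using wint by (simp add: integral_sum)
  also have "\<dots> = (\<integral>y. (\<Sum>i\<in>UNIV. a$i * w i y)\<^sup>2 \<partial>P)"
    by (simp add: power2_eq_square sum_product algebra_simps)
  also have "\<dots> \<ge> 0" by simp
  finally show ?thesis .
qed

lemma l1: fixes act :: "'g \<Rightarrow> 'x \<Rightarrow> 'x"
 assumes act_meas: "(\<lambda>(g, x). act g x) \<in> Q \<Otimes>\<^sub>M \<mu> \<rightarrow>\<^sub>M \<mu>"
 shows "(\<lambda>(x, g). act g x) \<in> \<mu> \<Otimes>\<^sub>M Q \<rightarrow>\<^sub>M \<mu>"
proof -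
  have "(\<lambda>p. (\<lambda>(g, x). act g x) ((\<lambda>(x, y). (y, x)) p)) \<in> \<mu> \<Otimes>\<^sub>M Q \<rightarrow>\<^sub>M \<mu>"
    by (rule measurable_compose[OF measurable_pair_swap' act_meas])
  moreover have "(\<lambda>p. (\<lambda>(g, x). act g x) ((\<lambda>(x, y). (y, x)) p)) = (\<lambda>(x, g). act g x)"
    by (auto simp: fun_eq_iff)
  ultimately show ?thesis by simp
qed
lemma l2: fixes act :: "'g \<Rightarrow> 'x \<Rightarrow> 'x" and s :: "'x \<Rightarrow> real^'n"
 assumes sw: "(\<lambda>(x, g). act g x) \<in> \<mu> \<Otimes>\<^sub>M Q \<rightarrow>\<^sub>M \<mu>" and s_meas: "s \<in> borel_measurable \<mu>"
 shows "(\<lambda>(x, g). s (act g x) $ i) \<in> borel_measurable (\<mu> \<Otimes>\<^sub>M Q)"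
proof -
  have "(\<lambda>p. s ((\<lambda>(x, g). act g x) p)) \<in> borel_measurable (\<mu> \<Otimes>\<^sub>M Q)"
    by (rule measurable_compose[OF sw s_meas])
  then have "(\<lambda>p. s ((\<lambda>(x, g). act g x) p) $ i) \<in> borel_measurable (\<mu> \<Otimes>\<^sub>M Q)"
    by (rule measurable_compose[OF _ borel_measurable_nth])
  moreover have "(\<lambda>p. s ((\<lambda>(x, g). act g x) p) $ i) = (\<lambda>(x, g). s (act g x) $ i)"
    by (auto simp: fun_eq_iff)
  ultimately show ?thesis by simp
qed
lemma l3: fixes A :: "real^'n^'n" assumes Asym: "transpose A = A" shows "A $ k $ l = A $ l $ k"
proof -
  have "A $ k $ l = transpose A $ l $ k" by (simp add: transpose_def)
  then show ?thesis using Asym by simp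
qed

theorem proposition4p9:
  fixes \<mu> :: "'x measure"
    and Pth :: "real^('p1::finite + 'p2::finite) \<Rightarrow> 'x measure"
    and ll :: "real^('p1 + 'p2) \<Rightarrow> 'x \<Rightarrow> real"
    and \<theta>0 :: "real^('p1 + 'p2)"
    and s :: "'x \<Rightarrow> real^('p1 + 'p2)"
    and Q :: "'g measure"
    and act :: "'g \<Rightarrow> 'x \<Rightarrow> 'x"
  assumes model: "\<And>\<theta>. Pth \<theta> = density \<mu> (\<lambda>x. ennreal (exp (ll \<theta> x)))"
    and prob: "prob_space (Pth \<theta>0)"
    and score: "\<And>x. x \<in> space \<mu> \<Longrightarrow> ((\<lambda>\<theta>. ll \<theta> x) has_derivative (\<lambda>h. s x \<bullet> h)) (at \<theta>0)"
    and s_meas: "s \<in> borel_measurable \<mu>"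
    and s_L2: "\<And>i. integrable (Pth \<theta>0) (\<lambda>x. (s x $ i)\<^sup>2)"
    and Q_prob: "prob_space Q"
    and act_meas: "(\<lambda>(g, x). act g x) \<in> Q \<Otimes>\<^sub>M \<mu> \<rightarrow>\<^sub>M \<mu>"
    and orbit_int: "\<And>x i. x \<in> space \<mu> \<Longrightarrow> integrable Q (\<lambda>g. s (act g x) $ i)"
    and avg_L2: "\<And>i. integrable (Pth \<theta>0) (\<lambda>x. (avg_score Q act s x $ i)\<^sup>2)"
    and I_inv: "invertible (fisher_info (Pth \<theta>0) s)"
    and Ibar_inv: "invertible (cov_matrix (Pth \<theta>0) (avg_score Q act s))"
  shows "loewner_le
           (blk11 (matrix_inv (fisher_info (Pth \<theta>0) s)
                   ** cov_matrix (Pth \<theta>0) (avg_score Q act s)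
                   ** matrix_inv (fisher_info (Pth \<theta>0) s)))
           (matrix_inv (blk11 (fisher_info (Pth \<theta>0) s)))
         \<longleftrightarrow> psd (M_mat (fisher_info (Pth \<theta>0) s) (cov_matrix (Pth \<theta>0) (avg_score Q act s)))"
proof -
  define I where "I = fisher_info (Pth \<theta>0) s"
  define B where "B = cov_matrix (Pth \<theta>0) (avg_score Q act s)"
  define A where "A = matrix_inv I"
  define R :: "real^('p1+'p2)^'p1" where "R = (\<chi> i k. A $ Inl i $ k)"
  have Isym: "transpose I = I"
    by (simp add: I_def fisher_info_def transpose_def vec_eq_iff mult.commute)
  have Asym: "transpose A = A" unfolding A_def using inv_sym[OF I_inv[folded I_def] Isym] .
  have Asym': "A $ k $ l = A $ l $ k" for k l
    by (rule l3[OF Asym])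
  have Bsym: "transpose B = B"
    by (simp add: B_def cov_matrix_def transpose_def vec_eq_iff mult.commute)
  have sets_eq: "sets (Pth \<theta>0) = sets \<mu>" unfolding model by simp
  interpret Qp: prob_space Q by (rule Q_prob)
  have avg_meas_mu: "(\<lambda>x. avg_score Q act s x $ i) \<in> borel_measurable \<mu>" for i
  proof -
    have sw: "(\<lambda>(x, g). act g x) \<in> \<mu> \<Otimes>\<^sub>M Q \<rightarrow>\<^sub>M \<mu>" by (rule l1[OF act_meas])
    have "(\<lambda>(x, g). s (act g x) $ i) \<in> borel_measurable (\<mu> \<Otimes>\<^sub>M Q)" by (rule l2[OF sw s_meas])
    then have "(\<lambda>x. \<integral>g. s (act g x) $ i \<partial>Q) \<in> borel_measurable \<mu>"
      by (rule Qp.borel_measurable_lebesgue_integral[where f="\<lambda>x g. s (act g x) $ i"])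
    then show ?thesis by (simp add: avg_score_def)
  qed
  have avg_meas: "(\<lambda>x. avg_score Q act s x $ i) \<in> borel_measurable (Pth \<theta>0)" for i
    by (subst measurable_cong_sets[OF sets_eq refl]) (rule avg_meas_mu)
  have Bpsd: "\<forall>x. 0 \<le> x \<bullet> (B *v x)"
    unfolding B_def using cov_psd[OF prob avg_meas avg_L2] by blast
  have RT: "transpose R = (\<chi> k j. A $ k $ Inl j)"
    by (simp add: R_def transpose_def vec_eq_iff Asym')
  have Meq: "M_mat I B = bm (matrix_inv (blk11 I)) R (transpose R) (matrix_inv B)"
    unfolding RT by (auto simp: R_def M_mat_def bm_def vec_eq_iff A_def split: sum.splits)
  have blk: "blk11 (A ** B ** A) = R ** B ** transpose R"
    unfolding RT by (simp add: blk11_def vec_eq_iff matrix_matrix_mult_def R_def)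
  show ?thesis
    unfolding I_def[symmetric] B_def[symmetric] A_def[symmetric] loewner_le_def blk Meq
    by (rule schur[OF Ibar_inv[folded B_def] Bsym Bpsd])
qed

end
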